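(* Let $A,B$ be systems of equal finite dimension $d$, each with observable $L=\sum_{n=0}^{d-1}n|n\rangle\langle n|$, and $L_{AB}=L\otimes\mathbb{I}+\mathbb{I}\otimes L$. Let $\rho_{AB}$ be a bipartite state with $[1,d-1]\cap\mathrm{modes}(\rho_{AB})=\emptyset$. Then there is no allowed operation that concentrates coherence, with respect to any coherence measure: for every allowed operation $\mathcal{E}$ on $AB$, the reduced states $\mathrm{tr}_B\mathcal{E}(\rho_{AB})$ and $\mathrm{tr}_A\mathcal{E}(\rho_{AB})$ are incoherent, i.e. commute with $L$.
   Context: For a bipartite operator $X$, its $j$th mode is $X^{(j)}:=\sum_c\Pi_{c+j}X\Pi_c$, with $\Pi_c$ the projector onto the eigenvalue-$c$ eigenspace of $L_{AB}$; $\mathrm{modes}(X):=\{j\in\mathbb{N}: X^{(j)}\neq0\}$. A state $\sigma$ of a system with observable $L$ is incoherent if $[\sigma,L]=0$. An allowed operation on $AB$ is a completely positive trace-preserving map $\mathcal{E}$ with $\mathcal{E}(e^{-iL_{AB}x}(\cdot)e^{iL_{AB}x})=e^{-iL_{AB}x}\mathcal{E}(\cdot)e^{iL_{AB}x}$ for all $x\in\mathbb{R}$. Any coherence measure considered vanishes on incoherent states. *)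

theory Defs
  imports "Jordan_Normal_Form.Matrix"
begin

(* Operators on C^n are complex n x n matrices (Jordan_Normal_Form mat).
   Bipartite system AB with local dimension d: basis |a>|b> has index a*d+b. *)

definition mtrace :: "complex mat \<Rightarrow> complex" where
  "mtrace A = (\<Sum>i<dim_row A. A $$ (i, i))"

definition kron :: "complex mat \<Rightarrow> complex mat \<Rightarrow> complex mat" where
  "kron A B = mat (dim_row A * dim_row B) (dim_col A * dim_col B)
     (\<lambda>(i, j). A $$ (i div dim_row B, j div dim_col B) * B $$ (i mod dim_row B, j mod dim_col B))"

definition psd :: "complex mat \<Rightarrow> bool" where
  "psd M \<longleftrightarrow> square_mat M \<and>
     (\<forall>v. dim_vec v = dim_row M \<longrightarrow>
        Im (conjugate v \<bullet> (M *\<^sub>v v)) = 0 \<and> Re (conjugate v \<bullet> (M *\<^sub>v v)) \<ge> 0)"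

definition is_state :: "nat \<Rightarrow> complex mat \<Rightarrow> bool" where
  "is_state n \<rho> \<longleftrightarrow> \<rho> \<in> carrier_mat n n \<and> psd \<rho> \<and> mtrace \<rho> = 1"

definition Lloc :: "nat \<Rightarrow> complex mat" where
  "Lloc d = mat d d (\<lambda>(i, j). if i = j then of_nat i else 0)"

definition LAB :: "nat \<Rightarrow> complex mat" where
  "LAB d = kron (Lloc d) (1\<^sub>m d) + kron (1\<^sub>m d) (Lloc d)"

(* projector onto the eigenvalue-c eigenspace of L_AB (L_AB is diagonal in the product basis) *)
definition Proj :: "nat \<Rightarrow> complex \<Rightarrow> complex mat" where
  "Proj d c = mat (d * d) (d * d) (\<lambda>(p, q). if p = q \<and> LAB d $$ (p, p) = c then 1 else 0)"

(* j-th mode X^(j) = sum_c Pi_{c+j} X Pi_c, c ranging over the eigenvalues 0,...,2d-2 of L_AB *)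
definition mode :: "nat \<Rightarrow> complex mat \<Rightarrow> nat \<Rightarrow> complex mat" where
  "mode d X j = foldr (\<lambda>c acc. Proj d (of_nat (c + j)) * X * Proj d (of_nat c) + acc)
                   [0..<2 * d - 1] (0\<^sub>m (d * d) (d * d))"

definition modes :: "nat \<Rightarrow> complex mat \<Rightarrow> nat set" where
  "modes d X = {j. mode d X j \<noteq> 0\<^sub>m (d * d) (d * d)}"

(* e^{-i L_AB x} (L_AB is diagonal) *)
definition Uev :: "nat \<Rightarrow> real \<Rightarrow> complex mat" where
  "Uev d x = mat (d * d) (d * d) (\<lambda>(p, q). if p = q then exp (- \<i> * of_real x * LAB d $$ (p, p)) else 0)"

definition block :: "nat \<Rightarrow> complex mat \<Rightarrow> nat \<Rightarrow> nat \<Rightarrow> complex mat" where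
  "block m M i j = mat m m (\<lambda>(x, y). M $$ (i * m + x, j * m + y))"

(* (id_n \<otimes> E) applied to an (n*m) x (n*m) matrix *)
definition ampl :: "nat \<Rightarrow> nat \<Rightarrow> (complex mat \<Rightarrow> complex mat) \<Rightarrow> complex mat \<Rightarrow> complex mat" where
  "ampl n m E M = mat (n * m) (n * m) (\<lambda>(p, q). E (block m M (p div m) (q div m)) $$ (p mod m, q mod m))"

definition cptp :: "nat \<Rightarrow> (complex mat \<Rightarrow> complex mat) \<Rightarrow> bool" where
  "cptp m E \<longleftrightarrow>
     (\<forall>X \<in> carrier_mat m m. E X \<in> carrier_mat m m) \<and>
     (\<forall>X \<in> carrier_mat m m. \<forall>Y \<in> carrier_mat m m. E (X + Y) = E X + E Y) \<and>
     (\<forall>X \<in> carrier_mat m m. \<forall>a. E (a \<cdot>\<^sub>m X) = a \<cdot>\<^sub>m E X) \<and>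
     (\<forall>X \<in> carrier_mat m m. mtrace (E X) = mtrace X) \<and>
     (\<forall>n. \<forall>M \<in> carrier_mat (n * m) (n * m). psd M \<longrightarrow> psd (ampl n m E M))"

definition allowed :: "nat \<Rightarrow> (complex mat \<Rightarrow> complex mat) \<Rightarrow> bool" where
  "allowed d E \<longleftrightarrow> cptp (d * d) E \<and>
     (\<forall>x::real. \<forall>X \<in> carrier_mat (d * d) (d * d).
        E (Uev d x * X * Uev d (- x)) = Uev d x * E X * Uev d (- x))"

definition ptrace_B :: "nat \<Rightarrow> complex mat \<Rightarrow> complex mat" where
  "ptrace_B d Y = mat d d (\<lambda>(a, a'). \<Sum>b<d. Y $$ (a * d + b, a' * d + b))"

definition ptrace_A :: "nat \<Rightarrow> complex mat \<Rightarrow> complex mat" where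
  "ptrace_A d Y = mat d d (\<lambda>(b, b'). \<Sum>a<d. Y $$ (a * d + b, a * d + b'))"

definition incoherent :: "complex mat \<Rightarrow> complex mat \<Rightarrow> bool" where
  "incoherent L \<sigma> \<longleftrightarrow> \<sigma> * L = L * \<sigma>"

end

theory Submission
  imports Defs
begin

lemma LAB_diag:
  assumes "p < d * d"
  shows "LAB d $$ (p, p) = of_nat (p div d + p mod d)"
proof -
  have d0: "0 < d" using assms by (cases d) auto
  have h1: "p div d < d" using assms by (simp add: less_mult_imp_div_less)
  have h2: "p mod d < d" using d0 by simp
  show ?thesis using assms h1 h2
    by (simp add: LAB_def kron_def Lloc_def)
qed

lemma diag_left:
  fixes X :: "complex mat" assumes X: "X \<in> carrier_mat n k" and p: "i < n" and q: "j < k"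
  shows "(mat n n (\<lambda>(i, j). if i = j then f i else 0) * X) $$ (i, j) = f i * X $$ (i, j)"
proof -
  have "(mat n n (\<lambda>(i, j). if i = j then f i else 0) * X) $$ (i, j)
     = (\<Sum>ia\<in>{0..<n}. (if i = ia then f i else 0) * X $$ (ia, j))"
    using X p q by (simp add: index_mult_mat scalar_prod_def)
  also have "\<dots> = (\<Sum>ia\<in>{0..<n}. if ia = i then f i * X $$ (i, j) else 0)"
    by (rule sum.cong) auto
  finally show ?thesis using p by simp
qed

lemma diag_right:
  fixes X :: "complex mat" assumes X: "X \<in> carrier_mat k n" and p: "i < k" and q: "j < n"
  shows "(X * mat n n (\<lambda>(i, j). if i = j then f i else 0)) $$ (i, j) = X $$ (i, j) * f j"
proof -
  have "(X * mat n n (\<lambda>(i, j). if i = j then f i else 0)) $$ (i, j)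
     = (\<Sum>ia\<in>{0..<n}. X $$ (i, ia) * (if ia = j then f ia else 0))"
    using X p q by (simp add: index_mult_mat scalar_prod_def)
  also have "\<dots> = (\<Sum>ia\<in>{0..<n}. if ia = j then X $$ (i, j) * f j else 0)"
    by (rule sum.cong) auto
  finally show ?thesis using q by simp
qed

lemma diag_conj:
  fixes X :: "complex mat" assumes X: "X \<in> carrier_mat n n" and p: "p < n" and q: "q < n"
  shows "(mat n n (\<lambda>(i, j). if i = j then f i else 0) * X * mat n n (\<lambda>(i, j). if i = j then g i else 0)) $$ (p, q)
     = f p * X $$ (p, q) * g q"
proof -
  have c: "mat n n (\<lambda>(i, j). if i = j then f i else 0) * X \<in> carrier_mat n n" using X by auto
  show ?thesis
    using diag_right[OF c p q] diag_left[OF X p q] by simp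
qed

lemma quad_form:
  fixes M :: "complex mat" and z :: complex
  assumes M: "M \<in> carrier_mat n n" and p: "p < n" and q: "q < n" and pq: "p \<noteq> q"
  defines "v \<equiv> vec n (\<lambda>k. (if k = p then 1 else 0) + (if k = q then z else 0))"
  shows "conjugate v \<bullet> (M *\<^sub>v v) = M $$ (p, p) + z * M $$ (p, q) + cnj z * M $$ (q, p) + cnj z * z * M $$ (q, q)"
proof -
  have Mv: "(M *\<^sub>v v) $ i = M $$ (i, p) + z * M $$ (i, q)" if i: "i < n" for i
  proof -
    have "(M *\<^sub>v v) $ i = (\<Sum>k\<in>{0..<n}. M $$ (i, k) * v $ k)"
      using M i by (simp add: v_def scalar_prod_def row_def)
    also have "\<dots> = (\<Sum>k\<in>{0..<n}. (if k = p then M $$ (i, p) else 0) + (if k = q then z * M $$ (i, q) else 0))"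
      by (rule sum.cong) (auto simp: v_def algebra_simps)
    also have "\<dots> = M $$ (i, p) + z * M $$ (i, q)"
      using p q by (simp add: sum.distrib)
    finally show ?thesis .
  qed
  have "conjugate v \<bullet> (M *\<^sub>v v) = (\<Sum>k\<in>{0..<n}. conjugate v $ k * (M *\<^sub>v v) $ k)"
    using M by (simp add: v_def scalar_prod_def)
  also have "\<dots> = (\<Sum>k\<in>{0..<n}. (if k = p then M $$ (p, p) + z * M $$ (p, q) else 0)
        + (if k = q then cnj z * (M $$ (q, p) + z * M $$ (q, q)) else 0))"
    using Mv[unfolded v_def] p q by (intro sum.cong) (auto simp: v_def pq)
  also have "\<dots> = M $$ (p, p) + z * M $$ (p, q) + cnj z * (M $$ (q, p) + z * M $$ (q, q))"
    using p q by (simp add: sum.distrib)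
  finally show ?thesis by (simp add: algebra_simps)
qed

lemma psd_herm:
  fixes M :: "complex mat"
  assumes ps: "psd M" and M: "M \<in> carrier_mat n n" and p: "p < n" and q: "q < n" and pq: "p \<noteq> q"
  shows "M $$ (q, p) = cnj (M $$ (p, q))"
proof -
  have im: "Im (conjugate v \<bullet> (M *\<^sub>v v)) = 0" if "dim_vec v = n" for v
    using ps M that unfolding psd_def by auto
  have e0: "Im (M $$ (p, p)) = 0"
    using im[of "vec n (\<lambda>k. (if k = p then 1 else 0) + (if k = q then 0 else 0))"] quad_form[OF M p q pq, of 0]
    by simp
  have e0': "Im (M $$ (q, q)) = 0"
    using im[of "vec n (\<lambda>k. (if k = q then 1 else 0) + (if k = p then 0 else 0))"] quad_form[OF M q p pq[symmetric], of 0]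
    by simp
  have e1: "Im (M $$ (p, q)) + Im (M $$ (q, p)) = 0"
    using im[of "vec n (\<lambda>k. (if k = p then 1 else 0) + (if k = q then 1 else 0))"] quad_form[OF M p q pq, of 1] e0 e0'
    by simp
  have e2: "Re (M $$ (p, q)) - Re (M $$ (q, p)) = 0"
    using im[of "vec n (\<lambda>k. (if k = p then 1 else 0) + (if k = q then \<i> else 0))"] quad_form[OF M p q pq, of \<i>] e0 e0'
    by simp
  show ?thesis using e1 e2 by (intro complex_eqI) auto
qed

definition lv :: "nat \<Rightarrow> nat \<Rightarrow> int" where "lv d p = int (p div d + p mod d)"

definition restr :: "nat \<Rightarrow> complex mat \<Rightarrow> int set \<Rightarrow> complex mat" where
  "restr d X S = mat (d * d) (d * d) (\<lambda>(p, q). if lv d p - lv d q \<in> S then X $$ (p, q) else 0)"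

lemma Uev_conj_entry:
  fixes X :: "complex mat"
  assumes X: "X \<in> carrier_mat (d * d) (d * d)" and p: "p < d * d" and q: "q < d * d"
  shows "(Uev d x * X * Uev d (- x)) $$ (p, q) = exp (- \<i> * of_real x * of_int (lv d p - lv d q)) * X $$ (p, q)"
proof -
  have "(Uev d x * X * Uev d (- x)) $$ (p, q) =
    exp (- \<i> * of_real x * LAB d $$ (p, p)) * X $$ (p, q) * exp (- \<i> * of_real (- x) * LAB d $$ (q, q))"
    unfolding Uev_def by (rule diag_conj[OF X p q])
  also have "\<dots> = exp (- \<i> * of_real x * of_int (lv d p - lv d q)) * X $$ (p, q)"
    using p q by (simp add: LAB_diag lv_def algebra_simps flip: exp_add)
  finally show ?thesis .
qed

lemma exp_neg_diff:
  fixes k m :: int assumes "k \<noteq> m"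
  shows "exp (- \<i> * of_real (pi / of_int (k - m)) * of_int k) = - exp (- \<i> * of_real (pi / of_int (k - m)) * of_int m)"
proof -
  have kmc: "(of_int k - of_int m :: complex) \<noteq> 0" using assms by simp
  have r: "(of_real (pi / of_int (k - m)) :: complex) = of_real pi / (of_int k - of_int m)"
    by simp
  have "- \<i> * of_real (pi / of_int (k - m)) * of_int k
     = - \<i> * of_real (pi / of_int (k - m)) * of_int m + - (\<i> * of_real pi)"
    (is "?l = ?r") unfolding r using kmc by (simp add: field_simps)
  have e: "exp (- (\<i> * of_real pi)) = (-1::complex)" by (simp add: exp_minus)
  show ?thesis unfolding \<open>?l = ?r\<close> exp_add e by simp
qed

lemma single_mode:
  fixes X :: "complex mat"
  assumes al: "allowed d E" and X: "X \<in> carrier_mat (d * d) (d * d)"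
    and sup: "\<And>p q. p < d * d \<Longrightarrow> q < d * d \<Longrightarrow> lv d p - lv d q \<noteq> k \<Longrightarrow> X $$ (p, q) = 0"
    and p: "p < d * d" and q: "q < d * d" and ne: "lv d p - lv d q \<noteq> k"
  shows "E X $$ (p, q) = 0"
proof -
  have cp: "cptp (d * d) E" and cov: "\<And>x. E (Uev d x * X * Uev d (- x)) = Uev d x * E X * Uev d (- x)"
    using al X unfolding allowed_def by auto
  have EX: "E X \<in> carrier_mat (d * d) (d * d)" using cp X unfolding cptp_def by auto
  have hom: "E (a \<cdot>\<^sub>m X) = a \<cdot>\<^sub>m E X" for a using cp X unfolding cptp_def by auto
  define m where "m = lv d p - lv d q"
  define x where "x = pi / of_int (k - m)"
  have km: "k \<noteq> m" using ne m_def by simp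
  have eq: "Uev d x * X * Uev d (- x) = exp (- \<i> * of_real x * of_int k) \<cdot>\<^sub>m X"
  proof (rule eq_matI)
    fix i j assume i: "i < dim_row (exp (- \<i> * of_real x * of_int k) \<cdot>\<^sub>m X)" and j: "j < dim_col (exp (- \<i> * of_real x * of_int k) \<cdot>\<^sub>m X)"
    then have i': "i < d * d" and j': "j < d * d" using X by auto
    show "(Uev d x * X * Uev d (- x)) $$ (i, j) = (exp (- \<i> * of_real x * of_int k) \<cdot>\<^sub>m X) $$ (i, j)"
      using Uev_conj_entry[OF X i' j', of x] sup[OF i' j'] i' j' X by (cases "lv d i - lv d j = k") auto
  qed (use X in \<open>auto simp: Uev_def\<close>)
  have "exp (- \<i> * of_real x * of_int k) * E X $$ (p, q) = (Uev d x * E X * Uev d (- x)) $$ (p, q)"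
  proof -
    have "Uev d x * E X * Uev d (- x) = exp (- \<i> * of_real x * of_int k) \<cdot>\<^sub>m E X"
      using cov[of x] eq hom by simp
    then show ?thesis using EX p q by simp
  qed
  also have "\<dots> = exp (- \<i> * of_real x * of_int m) * E X $$ (p, q)"
    using Uev_conj_entry[OF EX p q] m_def by simp
  finally have "exp (- \<i> * of_real x * of_int k) * E X $$ (p, q) = exp (- \<i> * of_real x * of_int m) * E X $$ (p, q)" .
  then have "- exp (- \<i> * of_real x * of_int m) * E X $$ (p, q) = exp (- \<i> * of_real x * of_int m) * E X $$ (p, q)"
    using exp_neg_diff[OF km] x_def by simp
  then have "2 * exp (- \<i> * of_real x * of_int m) * E X $$ (p, q) = 0"
    by (simp add: algebra_simps)
  then show ?thesis by simp
qed

lemma restr_carrier: "restr d X S \<in> carrier_mat (d * d) (d * d)"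
  by (simp add: restr_def)

lemma restr_list:
  fixes X :: "complex mat"
  assumes al: "allowed d E" and X: "X \<in> carrier_mat (d * d) (d * d)"
    and p: "p < d * d" and q: "q < d * d"
  shows "m \<notin> set ks \<Longrightarrow> lv d p - lv d q = m \<Longrightarrow> E (restr d X (set ks)) $$ (p, q) = 0"
proof (induction ks)
  case Nil
  have cp: "cptp (d * d) E" using al unfolding allowed_def by auto
  have z: "restr d X (set []) = 0 \<cdot>\<^sub>m 0\<^sub>m (d * d) (d * d)"
    by (rule eq_matI) (auto simp: restr_def)
  have h: "E (0 \<cdot>\<^sub>m 0\<^sub>m (d * d) (d * d)) = 0 \<cdot>\<^sub>m E (0\<^sub>m (d * d) (d * d))"
    using cp zero_carrier_mat unfolding cptp_def by blast
  have c: "E (0\<^sub>m (d * d) (d * d)) \<in> carrier_mat (d * d) (d * d)"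
    using cp unfolding cptp_def by auto
  have "E (restr d X (set [])) $$ (p, q) = (0 \<cdot>\<^sub>m E (0\<^sub>m (d * d) (d * d))) $$ (p, q)"
    unfolding z h by (rule refl)
  also have "\<dots> = 0" using c p q by simp
  finally show ?case .
next
  case (Cons k ks)
  show ?case
  proof (cases "k \<in> set ks")
    case True
    then have "set (k # ks) = set ks" by auto
    then show ?thesis using Cons by simp
  next
    case False
    have cp: "cptp (d * d) E" using al unfolding allowed_def by auto
    have split: "restr d X (set (k # ks)) = restr d X {k} + restr d X (set ks)"
      using False by (intro eq_matI) (auto simp: restr_def)
    have add: "E (restr d X {k} + restr d X (set ks)) = E (restr d X {k}) + E (restr d X (set ks))"
      using cp restr_carrier unfolding cptp_def by blast
    have c1: "E (restr d X {k}) \<in> carrier_mat (d * d) (d * d)"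
      using cp restr_carrier unfolding cptp_def by blast
    have c2: "E (restr d X (set ks)) \<in> carrier_mat (d * d) (d * d)"
      using cp restr_carrier unfolding cptp_def by blast
    have z1: "E (restr d X {k}) $$ (p, q) = 0"
      by (rule single_mode[OF al restr_carrier _ p q, of k]) (use Cons.prems in \<open>auto simp: restr_def\<close>)
    have z2: "E (restr d X (set ks)) $$ (p, q) = 0" using Cons by simp
    show ?thesis unfolding split add using c1 c2 z1 z2 p q by simp
  qed
qed

lemma lv_bound: "0 < d \<Longrightarrow> p < d * d \<Longrightarrow> 0 \<le> lv d p \<and> lv d p \<le> 2 * int d"
proof -
  assume d: "0 < d" and p: "p < d * d"
  have "p div d < d" using p by (simp add: less_mult_imp_div_less)
  moreover have "p mod d < d" using d by simp
  ultimately show ?thesis unfolding lv_def by linarith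
qed

lemma E_zero_at:
  fixes X :: "complex mat"
  assumes d: "0 < d" and al: "allowed d E" and X: "X \<in> carrier_mat (d * d) (d * d)"
    and z: "\<And>p q. p < d * d \<Longrightarrow> q < d * d \<Longrightarrow> lv d p - lv d q = m \<Longrightarrow> X $$ (p, q) = 0"
    and p: "p < d * d" and q: "q < d * d" and pq: "lv d p - lv d q = m"
  shows "E X $$ (p, q) = 0"
proof -
  define ks where "ks = filter (\<lambda>k. k \<noteq> m) [- (2 * int d)..2 * int d]"
  have "restr d X (set ks) = X"
  proof (rule eq_matI)
    fix i j assume "i < dim_row X" "j < dim_col X"
    then have i: "i < d * d" and j: "j < d * d" using X by auto
    show "restr d X (set ks) $$ (i, j) = X $$ (i, j)"
      using lv_bound[OF d i] lv_bound[OF d j] z[OF i j] i j by (auto simp: restr_def ks_def)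
  qed (use X in \<open>auto simp: restr_def\<close>)
  moreover have "E (restr d X (set ks)) $$ (p, q) = 0"
    by (rule restr_list[OF al X p q]) (use pq in \<open>auto simp: ks_def\<close>)
  ultimately show ?thesis by simp
qed

lemma Proj_diag: "Proj d c = mat (d * d) (d * d) (\<lambda>(i, j). if i = j then (if LAB d $$ (i, i) = c then 1 else 0) else 0)"
  unfolding Proj_def by (rule eq_matI) auto

lemma mode_fold:
  fixes X :: "complex mat"
  assumes X: "X \<in> carrier_mat (d * d) (d * d)"
  shows "foldr (\<lambda>c acc. Proj d (of_nat (c + j)) * X * Proj d (of_nat c) + acc) cs (0\<^sub>m (d * d) (d * d))
      \<in> carrier_mat (d * d) (d * d) \<and>
    (\<forall>p q. p < d * d \<longrightarrow> q < d * d \<longrightarrow>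
      foldr (\<lambda>c acc. Proj d (of_nat (c + j)) * X * Proj d (of_nat c) + acc) cs (0\<^sub>m (d * d) (d * d)) $$ (p, q)
      = sum_list (map (\<lambda>c. if p div d + p mod d = c + j \<and> q div d + q mod d = c then X $$ (p, q) else 0) cs))"
proof (induction cs)
  case Nil
  then show ?case by simp
next
  case (Cons c cs)
  have pc: "Proj d (of_nat (c + j)) * X * Proj d (of_nat c) \<in> carrier_mat (d * d) (d * d)"
    using X by (intro mult_carrier_mat) (auto simp: Proj_def)
  have ent: "(Proj d (of_nat (c + j)) * X * Proj d (of_nat c)) $$ (p, q) =
     (if p div d + p mod d = c + j \<and> q div d + q mod d = c then X $$ (p, q) else 0)"
    if p: "p < d * d" and q: "q < d * d" for p q
    unfolding Proj_diag diag_conj[OF X p q] using p q by (simp add: LAB_diag of_nat_eq_iff del: of_nat_add)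
  show ?case using Cons pc ent by auto
qed

lemma mode_zero_entry:
  fixes X :: "complex mat"
  assumes d: "0 < d" and X: "X \<in> carrier_mat (d * d) (d * d)" and m: "mode d X j = 0\<^sub>m (d * d) (d * d)"
    and p: "p < d * d" and q: "q < d * d" and pq: "p div d + p mod d = q div d + q mod d + j"
  shows "X $$ (p, q) = 0"
proof -
  have "0 = mode d X j $$ (p, q)" using m p q by simp
  also have "\<dots> = sum_list (map (\<lambda>c. if p div d + p mod d = c + j \<and> q div d + q mod d = c then X $$ (p, q) else 0) [0..<2 * d - 1])"
    using mode_fold[OF X, of j "[0..<2 * d - 1]"] p q unfolding mode_def by blast
  also have "\<dots> = (\<Sum>c\<in>{0..<2 * d - 1}. if c = q div d + q mod d then X $$ (p, q) else 0)"
    by (subst sum_list_distinct_conv_sum_set) (auto intro!: sum.cong simp: pq)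
  also have "\<dots> = X $$ (p, q)"
  proof -
    have "q div d < d" using q by (simp add: less_mult_imp_div_less)
    moreover have "q mod d < d" using d by simp
    ultimately have "q div d + q mod d < 2 * d - 1" by linarith
    then show ?thesis by simp
  qed
  finally show ?thesis by simp
qed

lemma rho_zero:
  fixes \<rho> :: "complex mat"
  assumes d: "0 < d" and st: "is_state (d * d) \<rho>" and md: "{1..d - 1} \<inter> modes d \<rho> = {}"
    and p: "p < d * d" and q: "q < d * d" and pq: "lv d p - lv d q = m" and m0: "m \<noteq> 0"
    and mb: "\<bar>m\<bar> \<le> int d - 1"
  shows "\<rho> $$ (p, q) = 0"
proof -
  have R: "\<rho> \<in> carrier_mat (d * d) (d * d)" and ps: "psd \<rho>" using st unfolding is_state_def by auto
  have mz: "mode d \<rho> j = 0\<^sub>m (d * d) (d * d)" if "1 \<le> j" "j \<le> d - 1" for j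
    using md that unfolding modes_def by auto
  show ?thesis
  proof (cases "m > 0")
    case True
    define j where "j = nat m"
    have "p div d + p mod d = q div d + q mod d + j" using pq True unfolding lv_def j_def by linarith
    moreover have "1 \<le> j" "j \<le> d - 1" using True mb d unfolding j_def by linarith+
    ultimately show ?thesis using mode_zero_entry[OF d R mz p q] by blast
  next
    case False
    define j where "j = nat (- m)"
    have "q div d + q mod d = p div d + p mod d + j" using pq False m0 unfolding lv_def j_def by linarith
    moreover have "1 \<le> j" "j \<le> d - 1" using False m0 mb d unfolding j_def by linarith+
    ultimately have z: "\<rho> $$ (q, p) = 0" using mode_zero_entry[OF d R mz q p] by blast
    have "p \<noteq> q" using pq m0 by auto
    then have "\<rho> $$ (p, q) = cnj (\<rho> $$ (q, p))" using psd_herm[OF ps R q p] by simp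
    then show ?thesis using z by simp
  qed
qed

lemma Erho_zero:
  fixes \<rho> :: "complex mat"
  assumes d: "0 < d" and st: "is_state (d * d) \<rho>" and md: "{1..d - 1} \<inter> modes d \<rho> = {}"
    and al: "allowed d E"
    and p: "p < d * d" and q: "q < d * d" and pq: "lv d p - lv d q = m" and m0: "m \<noteq> 0"
    and mb: "\<bar>m\<bar> \<le> int d - 1"
  shows "E \<rho> $$ (p, q) = 0"
proof -
  have R: "\<rho> \<in> carrier_mat (d * d) (d * d)" using st unfolding is_state_def by auto
  show ?thesis
    by (rule E_zero_at[OF d al R _ p q pq]) (rule rho_zero[OF d st md _ _ _ m0 mb])
qed

lemma idx_bound: "(a::nat) < d \<Longrightarrow> b < d \<Longrightarrow> a * d + b < d * d"
proof -
  assume a: "a < d" and b: "b < d"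
  have "a * d + b < a * d + d" using b by simp
  also have "\<dots> = (a + 1) * d" by simp
  also have "\<dots> \<le> d * d" using a by (intro mult_right_mono) auto
  finally show ?thesis .
qed

lemma lv_idx: "b < d \<Longrightarrow> lv d (a * d + b) = int a + int b"
  unfolding lv_def by simp

lemma diag_comm:
  fixes \<sigma> :: "complex mat"
  assumes S: "\<sigma> \<in> carrier_mat d d" and off: "\<And>a a'. a < d \<Longrightarrow> a' < d \<Longrightarrow> a \<noteq> a' \<Longrightarrow> \<sigma> $$ (a, a') = 0"
  shows "incoherent (Lloc d) \<sigma>"
  unfolding incoherent_def
proof (rule eq_matI)
  fix i j assume i: "i < dim_row (Lloc d * \<sigma>)" and j: "j < dim_col (Lloc d * \<sigma>)"
  then have i': "i < d" and j': "j < d" using S by (auto simp: Lloc_def)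
  have "(\<sigma> * Lloc d) $$ (i, j) = \<sigma> $$ (i, j) * of_nat j"
    unfolding Lloc_def by (rule diag_right[OF S i' j', where f = of_nat])
  moreover have "(Lloc d * \<sigma>) $$ (i, j) = of_nat i * \<sigma> $$ (i, j)"
    unfolding Lloc_def by (rule diag_left[OF S i' j', where f = of_nat])
  ultimately show "(\<sigma> * Lloc d) $$ (i, j) = (Lloc d * \<sigma>) $$ (i, j)"
    using off[OF i' j'] by (cases "i = j") auto
qed (use S in \<open>auto simp: Lloc_def\<close>)

theorem mainTheorem6:
  fixes d :: nat and \<rho> :: "complex mat" and E :: "complex mat \<Rightarrow> complex mat"
  assumes "0 < d"
    and "is_state (d * d) \<rho>"
    and "{1..d - 1} \<inter> modes d \<rho> = {}"
    and "allowed d E"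
  shows "incoherent (Lloc d) (ptrace_B d (E \<rho>)) \<and> incoherent (Lloc d) (ptrace_A d (E \<rho>))"
proof
  note Z = Erho_zero[OF assms]
  show "incoherent (Lloc d) (ptrace_B d (E \<rho>))"
  proof (rule diag_comm)
    fix a a' assume a: "a < d" and a': "a' < d" and ne: "a \<noteq> a'"
    have "E \<rho> $$ (a * d + b, a' * d + b) = 0" if b: "b < d" for b
      by (rule Z[OF idx_bound[OF a b] idx_bound[OF a' b], of "int a - int a'"])
        (use a a' b ne in \<open>auto simp: lv_idx\<close>)
    then show "ptrace_B d (E \<rho>) $$ (a, a') = 0" using a a' by (simp add: ptrace_B_def)
  qed (simp add: ptrace_B_def)
  show "incoherent (Lloc d) (ptrace_A d (E \<rho>))"
  proof (rule diag_comm)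
    fix b b' assume b: "b < d" and b': "b' < d" and ne: "b \<noteq> b'"
    have "E \<rho> $$ (a * d + b, a * d + b') = 0" if a: "a < d" for a
      by (rule Z[OF idx_bound[OF a b] idx_bound[OF a b'], of "int b - int b'"])
        (use b b' a ne in \<open>auto simp: lv_idx\<close>)
    then show "ptrace_A d (E \<rho>) $$ (b, b') = 0" using b b' by (simp add: ptrace_A_def)
  qed (simp add: ptrace_A_def)
qed

end
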